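(* Let $(\mathcal{G},S)$ be an instance of \textsc{Temporally Disjoint Walks} where $\mathcal{G}$ is a temporal line, and let $\mathcal{S}$ be a solution that minimizes the sum of the lengths of its walks among all solutions. Let $W\in\mathcal{S}$ be a temporal $(s,z)$-walk. Then at most $2|S|$ pairs of transitions of the form $(a,b,t),(b,a,t')$ with $t<t'$ are consecutive in $W$.
   Context: A temporal graph $\mathcal{G}=(V,E_1,\ldots,E_T)$ has vertex set $V$ and edge sets $E_1,\ldots,E_T\subseteq\binom{V}{2}$; it is a temporal line if its underlying graph $(V,\bigcup_i E_i)$ is a path. A temporal $(s,z)$-walk of length $k$ from $s=v_0$ to $z=v_k$ is a sequence of transitions $((v_{i-1},v_i,t_i))_{i=1}^k$ with $\{v_{i-1},v_i\}\in E_{t_i}$ and $t_1<\cdots<t_k$. It occupies $v_i$ during $[t_i,t_{i+1}]$ for $i\in[k-1]$, $v_0$ during $[t_1,t_1]$ and $v_k$ during $[t_k,t_k]$. Two temporal walks are temporally disjoint unless some vertex is occupied by both during intersecting time intervals. \textsc{Temporally Disjoint Walks} asks, given $\mathcal{G}$ and a multiset $S\subseteq V\times V$ of source-sink pairs, for pairwise temporally disjoint temporal $(s_i,z_i)$-walks, one for each $(s_i,z_i)\in S$; a solution $\mathcal{S}$ is such a family, and $|S|$ is the number of source-sink pairs. *)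

theory Defs
  imports Main "HOL-Library.Multiset"
begin

definition temporal_graph :: "'v set \<Rightarrow> ('v set set) list \<Rightarrow> bool" where
  "temporal_graph V Es \<longleftrightarrow> finite V \<and>
     (\<forall>Et \<in> set Es. \<forall>e \<in> Et. \<exists>u v. e = {u, v} \<and> u \<noteq> v \<and> u \<in> V \<and> v \<in> V)"

text \<open>Edge set at time step t (time steps are 1..T with T = length Es).\<close>
definition edges_at :: "('v set set) list \<Rightarrow> nat \<Rightarrow> 'v set set" where
  "edges_at Es t = (if 1 \<le> t \<and> t \<le> length Es then Es ! (t - 1) else {})"

definition underlying_edges :: "('v set set) list \<Rightarrow> 'v set set" where
  "underlying_edges Es = (\<Union>t\<in>{1..length Es}. edges_at Es t)"

definition temporal_line :: "'v set \<Rightarrow> ('v set set) list \<Rightarrow> bool" where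
  "temporal_line V Es \<longleftrightarrow> temporal_graph V Es \<and>
     (\<exists>vs. vs \<noteq> [] \<and> distinct vs \<and> set vs = V \<and>
        underlying_edges Es = {{vs ! i, vs ! (i + 1)} | i. i + 1 < length vs})"

text \<open>A temporal walk is the list of its transitions (v_{i-1}, v_i, t_i).\<close>
type_synonym 'v twalk = "('v \<times> 'v \<times> nat) list"

definition tw_from :: "'v twalk \<Rightarrow> nat \<Rightarrow> 'v" where "tw_from W i = fst (W ! i)"
definition tw_to :: "'v twalk \<Rightarrow> nat \<Rightarrow> 'v" where "tw_to W i = fst (snd (W ! i))"
definition tw_time :: "'v twalk \<Rightarrow> nat \<Rightarrow> nat" where "tw_time W i = snd (snd (W ! i))"

definition is_temporal_walk ::
  "('v set set) list \<Rightarrow> 'v \<Rightarrow> 'v \<Rightarrow> 'v twalk \<Rightarrow> bool" where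
  "is_temporal_walk Es s z W \<longleftrightarrow> W \<noteq> [] \<and>
     tw_from W 0 = s \<and> tw_to W (length W - 1) = z \<and>
     (\<forall>i < length W. {tw_from W i, tw_to W i} \<in> edges_at Es (tw_time W i)) \<and>
     (\<forall>i. i + 1 < length W \<longrightarrow> tw_to W i = tw_from W (i + 1) \<and>
                                 tw_time W i < tw_time W (i + 1))"

text \<open>Occupation: triples (v, a, b) meaning the walk occupies v during [a,b].\<close>
definition occupation :: "'v twalk \<Rightarrow> ('v \<times> nat \<times> nat) set" where
  "occupation W =
     {(tw_from W 0, tw_time W 0, tw_time W 0)} \<union>
     {(tw_to W i, tw_time W i, tw_time W (i + 1)) | i. i + 1 < length W} \<union>
     {(tw_to W (length W - 1), tw_time W (length W - 1), tw_time W (length W - 1))}"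

definition temporally_disjoint :: "'v twalk \<Rightarrow> 'v twalk \<Rightarrow> bool" where
  "temporally_disjoint W1 W2 \<longleftrightarrow>
     \<not> (\<exists>v a b c d. (v, a, b) \<in> occupation W1 \<and> (v, c, d) \<in> occupation W2 \<and>
                    max a c \<le> min b d)"

definition is_tdw_solution ::
  "('v set set) list \<Rightarrow> ('v \<times> 'v) multiset \<Rightarrow> (('v \<times> 'v) \<times> 'v twalk) list \<Rightarrow> bool" where
  "is_tdw_solution Es S Sol \<longleftrightarrow>
     mset (map fst Sol) = S \<and>
     (\<forall>i < length Sol. is_temporal_walk Es (fst (fst (Sol ! i))) (snd (fst (Sol ! i))) (snd (Sol ! i))) \<and>
     (\<forall>i < length Sol. \<forall>j < length Sol. i \<noteq> j \<longrightarrow>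
        temporally_disjoint (snd (Sol ! i)) (snd (Sol ! j)))"

definition total_length :: "(('v \<times> 'v) \<times> 'v twalk) list \<Rightarrow> nat" where
  "total_length Sol = (\<Sum>p \<leftarrow> Sol. length (snd p))"

definition num_back_and_forth :: "'v twalk \<Rightarrow> nat" where
  "num_back_and_forth W = card {i. i + 1 < length W \<and>
       tw_from W (i + 1) = tw_to W i \<and> tw_to W (i + 1) = tw_from W i \<and>
       tw_time W i < tw_time W (i + 1)}"

end

theory Submission
  imports Defs
begin

lemma walk_mono:
  assumes "is_temporal_walk Es s z W" "i < j" "j < length W"
  shows "tw_time W i < tw_time W j"
  using assms(2,3)
proof (induction j)
  case 0 then show ?case by simp
next
  case (Suc j)
  have st: "tw_time W j < tw_time W (Suc j)" using assms(1) Suc.prems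
    unfolding is_temporal_walk_def by auto
  show ?case
  proof (cases "i = j")
    case True then show ?thesis using st by simp
  next
    case False then show ?thesis using Suc st by auto
  qed
qed

lemma walk_mono_le:
  assumes "is_temporal_walk Es s z W" "i \<le> j" "j < length W"
  shows "tw_time W i \<le> tw_time W j"
  using walk_mono[OF assms(1)] assms(2,3) by (cases "i = j") (auto simp: less_imp_le)

lemma walk_consec:
  assumes "is_temporal_walk Es s z W" "i + 1 < length W"
  shows "tw_to W i = tw_from W (i + 1)" "tw_time W i < tw_time W (i + 1)"
  using assms unfolding is_temporal_walk_def by auto

lemma occ_le:
  assumes "is_temporal_walk Es s z W" "(v, x, y) \<in> occupation W"
  shows "x \<le> y"
  using assms(2) walk_consec(2)[OF assms(1)] unfolding occupation_def
  by (auto simp: less_imp_le)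

lemma occ_first: "(tw_from W 0, tw_time W 0, tw_time W 0) \<in> occupation W"
  unfolding occupation_def by auto
lemma occ_last: "(tw_to W (length W - 1), tw_time W (length W - 1), tw_time W (length W - 1)) \<in> occupation W"
  unfolding occupation_def by auto
lemma occ_mid: "i + 1 < length W \<Longrightarrow> (tw_to W i, tw_time W i, tw_time W (i + 1)) \<in> occupation W"
  unfolding occupation_def by auto

lemma disj_sym: "temporally_disjoint W1 W2 \<Longrightarrow> temporally_disjoint W2 W1"
  unfolding temporally_disjoint_def by (metis max.commute min.commute)

lemma disjD:
  "temporally_disjoint W1 W2 \<Longrightarrow> (v, a, b) \<in> occupation W1 \<Longrightarrow> (v, c, d) \<in> occupation W2 \<Longrightarrow> max a c \<le> min b d \<Longrightarrow> False"
  unfolding temporally_disjoint_def by blast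

lemma walk_edge:
  assumes "is_temporal_walk Es s z W" "i < length W"
  shows "{tw_from W i, tw_to W i} \<in> underlying_edges Es"
proof -
  have "{tw_from W i, tw_to W i} \<in> edges_at Es (tw_time W i)"
    using assms unfolding is_temporal_walk_def by auto
  then show ?thesis unfolding underlying_edges_def
    by (auto simp: edges_at_def split: if_splits)
qed

lemma path_nbr:
  assumes "temporal_line V Es"
    and "{a, x} \<in> underlying_edges Es" "{a, y} \<in> underlying_edges Es" "{a, w} \<in> underlying_edges Es"
    and "x \<noteq> w" "y \<noteq> w"
  shows "x = y"
proof -
  obtain vs where d: "distinct vs" and ue: "underlying_edges Es = {{vs ! i, vs ! (i + 1)} | i. i + 1 < length vs}"
    using assms(1) unfolding temporal_line_def by blast
  have nb: "\<exists>k. k < length vs \<and> a = vs ! k \<and> (u = vs ! (k+1) \<and> k + 1 < length vs \<or> (0 < k \<and> u = vs ! (k - 1)))"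
    if "{a, u} \<in> underlying_edges Es" for u
  proof -
    from that ue obtain i where i: "i + 1 < length vs" "{a, u} = {vs ! i, vs ! (i + 1)}" by auto
    then have "(a = vs ! i \<and> u = vs ! (i+1)) \<or> (a = vs ! (i+1) \<and> u = vs ! i)"
      by (auto simp: doubleton_eq_iff)
    then show ?thesis
    proof
      assume "a = vs ! i \<and> u = vs ! (i+1)" then show ?thesis using i by (intro exI[of _ i]) auto
    next
      assume "a = vs ! (i+1) \<and> u = vs ! i" then show ?thesis using i by (intro exI[of _ "i+1"]) auto
    qed
  qed
  obtain k1 where k1: "k1 < length vs" "a = vs ! k1" "x = vs ! (k1+1) \<and> k1 + 1 < length vs \<or> (0 < k1 \<and> x = vs ! (k1 - 1))"
    using nb[OF assms(2)] by blast
  obtain k2 where k2: "k2 < length vs" "a = vs ! k2" "y = vs ! (k2+1) \<and> k2 + 1 < length vs \<or> (0 < k2 \<and> y = vs ! (k2 - 1))"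
    using nb[OF assms(3)] by blast
  obtain k3 where k3: "k3 < length vs" "a = vs ! k3" "w = vs ! (k3+1) \<and> k3 + 1 < length vs \<or> (0 < k3 \<and> w = vs ! (k3 - 1))"
    using nb[OF assms(4)] by blast
  have "k1 = k2" "k2 = k3" using k1 k2 k3 d nth_eq_iff_index_eq by metis+
  then show ?thesis using k1 k2 k3 assms(5,6) by auto
qed


definition sc :: "'v twalk \<Rightarrow> nat \<Rightarrow> 'v twalk" where
  "sc W j = take j W @ drop (Suc (Suc j)) W"

lemma sc_len: "j + 2 \<le> length W \<Longrightarrow> length (sc W j) = length W - 2"
  unfolding sc_def by auto

lemma sc_nth: "j + 2 \<le> length W \<Longrightarrow> i < length W - 2 \<Longrightarrow>
   sc W j ! i = (if i < j then W ! i else W ! (i + 2))"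
  unfolding sc_def by (auto simp: nth_append min_def)

lemma sc_acc:
  assumes "j + 2 \<le> length W" "i < length W - 2"
  shows "tw_from (sc W j) i = (if i < j then tw_from W i else tw_from W (i + 2))"
    "tw_to (sc W j) i = (if i < j then tw_to W i else tw_to W (i + 2))"
    "tw_time (sc W j) i = (if i < j then tw_time W i else tw_time W (i + 2))"
  using sc_nth[OF assms] unfolding tw_from_def tw_to_def tw_time_def by auto

lemma sc_walk:
  assumes w: "is_temporal_walk Es s z W" and n: "3 \<le> length W" "j + 1 < length W"
    and bf: "tw_from W (j+1) = tw_to W j" "tw_to W (j+1) = tw_from W j"
  shows "is_temporal_walk Es s z (sc W j)"
proof -
  let ?W = "sc W j" let ?n = "length W"
  have j2: "j + 2 \<le> ?n" using n by auto
  have L: "length ?W = ?n - 2" using sc_len[OF j2] .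
  note A = sc_acc[OF j2]
  have ne: "?W \<noteq> []" using L n by auto
  have s0: "tw_from ?W 0 = s"
  proof (cases "0 < j")
    case True then show ?thesis using A(1)[of 0] n w unfolding is_temporal_walk_def by auto
  next
    case False
    then have "j = 0" by auto
    then have "tw_from ?W 0 = tw_from W 2" using A(1)[of 0] n by (auto simp: numeral_2_eq_2)
    also have "\<dots> = tw_to W 1" using walk_consec(1)[OF w, of 1] n by (auto simp: numeral_2_eq_2)
    also have "\<dots> = tw_from W 0" using bf \<open>j = 0\<close> by auto
    finally show ?thesis using w unfolding is_temporal_walk_def by auto
  qed
  have zz: "tw_to ?W (length ?W - 1) = z"
  proof (cases "?n - 3 < j")
    case True
    then have jj: "j = ?n - 2" using n by auto
    have "tw_to ?W (length ?W - 1) = tw_to W (j - 1)" using A(2)[of "?n - 3"] L True n jj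
      by (auto simp: numeral_eq_Suc)
    also have "\<dots> = tw_from W (j - 1 + 1)" using walk_consec(1)[OF w, of "j - 1"] jj n by auto
    also have "j - 1 + 1 = j" using jj n by auto
    also have "tw_from W j = tw_to W (j + 1)" using bf by simp
    also have "j + 1 = ?n - 1" using jj n by auto
    finally show ?thesis using w unfolding is_temporal_walk_def by auto
  next
    case False
    have e3: "?n - 3 + 2 = ?n - 1" "length ?W - 1 = ?n - 3" using n L by auto
    then have "tw_to ?W (length ?W - 1) = tw_to W (?n - 1)" using A(2)[of "?n - 3"] L n False
      by auto
    then show ?thesis using w unfolding is_temporal_walk_def by auto
  qed
  have ed: "{tw_from ?W i, tw_to ?W i} \<in> edges_at Es (tw_time ?W i)" if "i < length ?W" for i
  proof -
    let ?k = "if i < j then i else i + 2"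
    have k: "?k < ?n" using that L by auto
    have "tw_from ?W i = tw_from W ?k" "tw_to ?W i = tw_to W ?k" "tw_time ?W i = tw_time W ?k"
      using that L A[of i] by auto
    then show ?thesis using w k unfolding is_temporal_walk_def by metis
  qed
  have cs: "tw_to ?W i = tw_from ?W (i + 1) \<and> tw_time ?W i < tw_time ?W (i + 1)" if i: "i + 1 < length ?W" for i
  proof -
    consider "i + 1 < j" | "i + 1 = j" | "j \<le> i" by linarith
    then show ?thesis
    proof cases
      case 1 then show ?thesis using A[of i] A[of "i+1"] i L walk_consec[OF w, of i] by auto
    next
      case 2
      have "tw_to ?W i = tw_to W (j - 1)" using A(2)[of i] i L 2 by auto
      also have "\<dots> = tw_from W j" using walk_consec(1)[OF w, of "j - 1"] 2 n by auto
      also have "\<dots> = tw_to W (j+1)" using bf by simp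
      also have "\<dots> = tw_from W (j+2)" using walk_consec(1)[OF w, of "j + 1"] 2 i L by auto
      also have "\<dots> = tw_from ?W (i + 1)" using A(1)[of "i+1"] i L 2 by auto
      finally have e: "tw_to ?W i = tw_from ?W (i + 1)" .
      have "tw_time ?W i = tw_time W (j - 1)" using A(3)[of i] i L 2 by auto
      also have "\<dots> < tw_time W (j + 2)" using walk_mono[OF w, of "j - 1" "j + 2"] 2 i L by auto
      also have "\<dots> = tw_time ?W (i + 1)" using A(3)[of "i+1"] i L 2 by auto
      finally show ?thesis using e by simp
    next
      case 3 then show ?thesis using A[of i] A[of "i+1"] i L walk_consec[OF w, of "i+2"] by auto
    qed
  qed
  show ?thesis unfolding is_temporal_walk_def using ne s0 zz ed cs by blast
qed

lemma sc_occ: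
  assumes w: "is_temporal_walk Es s z W" and n: "3 \<le> length W" "j + 1 < length W"
    and bf: "tw_from W (j+1) = tw_to W j" "tw_to W (j+1) = tw_from W j"
    and o: "(v, x, y) \<in> occupation (sc W j)"
  shows "(\<exists>x' y'. (v, x', y') \<in> occupation W \<and> x' \<le> x \<and> y \<le> y') \<or>
    (0 < j \<and> j + 2 < length W \<and> v = tw_from W j \<and> x = tw_time W (j - 1) \<and> y = tw_time W (j + 2))"
proof -
  let ?W = "sc W j" let ?n = "length W"
  have j2: "j + 2 \<le> ?n" using n by auto
  have L: "length ?W = ?n - 2" using sc_len[OF j2] .
  note A = sc_acc[OF j2]
  have cw: "tw_to W i = tw_from W (i + 1)" if "i + 1 < ?n" for i using walk_consec(1)[OF w that] .
  consider (f) "(v, x, y) = (tw_from ?W 0, tw_time ?W 0, tw_time ?W 0)"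
    | (m) i where "i + 1 < length ?W" "(v, x, y) = (tw_to ?W i, tw_time ?W i, tw_time ?W (i + 1))"
    | (l) "(v, x, y) = (tw_to ?W (length ?W - 1), tw_time ?W (length ?W - 1), tw_time ?W (length ?W - 1))"
    using o unfolding occupation_def by blast
  then show ?thesis
  proof cases
    case f
    show ?thesis
    proof (cases "0 < j")
      case True then show ?thesis using f A[of 0] n occ_first[of W] by auto
    next
      case False
      then have "v = tw_to W 1" "x = tw_time W 2" "y = tw_time W 2"
        using f A[of 0] n cw[of 1] by (auto simp: numeral_2_eq_2)
      then show ?thesis using occ_mid[of 1 W] n walk_mono[OF w, of 1 2] by (intro disjI1 exI[of _ "tw_time W 1"] exI[of _ "tw_time W 2"]) (auto simp: numeral_2_eq_2)
    qed
  next
    case (m i)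
    consider "i + 1 < j" | "i + 1 = j" | "j \<le> i" by linarith
    then show ?thesis
    proof cases
      case 1 then show ?thesis using m A[of i] A[of "i+1"] L occ_mid[of i W] n by auto
    next
      case 2 then show ?thesis using m A[of i] A[of "i+1"] L cw[of "j - 1"] by auto
    next
      case 3
      have ii: "i + 2 + 1 < length W" using m L by auto
      have "(v, x, y) = (tw_to W (i+2), tw_time W (i+2), tw_time W (i+2+1))"
        using 3 m A[of i] A[of "i+1"] L by auto
      then show ?thesis using occ_mid[OF ii] by auto
    qed
  next
    case l
    show ?thesis
    proof (cases "?n - 3 < j")
      case True
      then have jj: "j = ?n - 2" using n by auto
      then have "v = tw_to W (j - 1)" "x = tw_time W (j - 1)" "y = tw_time W (j - 1)"
        using l A[of "?n - 3"] L n by (auto simp: numeral_eq_Suc)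
      moreover have "j - 1 + 1 = j" using jj n by auto
      ultimately show ?thesis using occ_mid[of "j - 1" W] n jj walk_mono[OF w, of "j - 1" j]
        by (intro disjI1 exI[of _ "tw_time W (j - 1)"] exI[of _ "tw_time W j"]) auto
    next
      case False
      have e3: "?n - 3 + 2 = ?n - 1" "length ?W - 1 = ?n - 3" using n L by auto
      then have "(v, x, y) = (tw_to W (?n - 1), tw_time W (?n - 1), tw_time W (?n - 1))"
        using l A[of "?n - 3"] L n False by auto
      then show ?thesis using occ_last[of W] by auto
    qed
  qed
qed

lemma sc_disj:
  assumes w: "is_temporal_walk Es s z W" and n: "3 \<le> length W" "j + 1 < length W"
    and bf: "tw_from W (j+1) = tw_to W j" "tw_to W (j+1) = tw_from W j"
    and wx: "is_temporal_walk Es s' z' X"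
    and d: "temporally_disjoint W X" and nd: "\<not> temporally_disjoint (sc W j) X"
  shows "\<exists>c d. (tw_from W j, c, d) \<in> occupation X \<and> tw_time W j < c \<and> d < tw_time W (j+1)"
proof -
  obtain v x y c e where o1: "(v, x, y) \<in> occupation (sc W j)" and o2: "(v, c, e) \<in> occupation X"
    and le: "max x c \<le> min y e"
    using nd unfolding temporally_disjoint_def by blast
  have ce: "c \<le> e" using occ_le[OF wx o2] .
  from sc_occ[OF w n bf o1] show ?thesis
  proof
    assume "\<exists>x' y'. (v, x', y') \<in> occupation W \<and> x' \<le> x \<and> y \<le> y'"
    then obtain x' y' where "(v, x', y') \<in> occupation W" "x' \<le> x" "y \<le> y'" by blast
    then show ?thesis using disjD[OF d _ o2, of x' y'] le by auto
  next
    assume sp: "0 < j \<and> j + 2 < length W \<and> v = tw_from W j \<and> x = tw_time W (j - 1) \<and> y = tw_time W (j + 2)"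
    have m1: "(tw_from W j, tw_time W (j - 1), tw_time W j) \<in> occupation W"
      using occ_mid[of "j - 1" W] sp walk_consec(1)[OF w, of "j - 1"] by auto
    have m2: "(tw_from W j, tw_time W (j + 1), tw_time W (j + 2)) \<in> occupation W"
      using occ_mid[of "j + 1" W] sp bf by (auto simp: add.assoc)
    have t1: "tw_time W (j - 1) < tw_time W j" using walk_mono[OF w, of "j - 1" j] sp by auto
    have t2: "tw_time W (j + 1) < tw_time W (j + 2)" using walk_mono[OF w, of "j + 1" "j + 2"] sp by auto
    have t3: "tw_time W j < tw_time W (j + 1)" using walk_mono[OF w, of j "j + 1"] n by auto
    have "\<not> max (tw_time W (j - 1)) c \<le> min (tw_time W j) e" using disjD[OF d m1, of c e] o2 sp by auto
    moreover have "\<not> max (tw_time W (j + 1)) c \<le> min (tw_time W (j + 2)) e" using disjD[OF d m2, of c e] o2 sp by auto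
    ultimately have "tw_time W j < c" "e < tw_time W (j+1)" using le sp ce t1 t2 t3 by (auto simp: max_def min_def split: if_splits)
    then show ?thesis using o2 sp by blast
  qed
qed


lemma total_update:
  "p < length xs \<Longrightarrow> total_length (xs[p := y]) + length (snd (xs ! p)) = total_length xs + length (snd y)"
proof (induction xs arbitrary: p)
  case Nil then show ?case by simp
next
  case (Cons a xs)
  then show ?case by (cases p) (auto simp: total_length_def)
qed

lemma sol_update:
  assumes sol: "is_tdw_solution Es S Sol" and p: "p < length Sol"
    and w: "is_temporal_walk Es (fst (fst (Sol ! p))) (snd (fst (Sol ! p))) W'"
    and d: "\<forall>q < length Sol. q \<noteq> p \<longrightarrow> temporally_disjoint W' (snd (Sol ! q))"
  shows "is_tdw_solution Es S (Sol[p := (fst (Sol ! p), W')])"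
proof -
  let ?S = "Sol[p := (fst (Sol ! p), W')]"
  have "map fst ?S = map fst Sol" using p by (intro nth_equalityI) (auto simp: nth_list_update)
  moreover have "\<forall>i < length ?S. is_temporal_walk Es (fst (fst (?S ! i))) (snd (fst (?S ! i))) (snd (?S ! i))"
    using sol w p unfolding is_tdw_solution_def by (auto simp: nth_list_update)
  moreover have "\<forall>i < length ?S. \<forall>j < length ?S. i \<noteq> j \<longrightarrow> temporally_disjoint (snd (?S ! i)) (snd (?S ! j))"
    using sol d p disj_sym unfolding is_tdw_solution_def by (auto simp: nth_list_update)
  ultimately show ?thesis using sol unfolding is_tdw_solution_def by simp
qed

definition tt :: "'v twalk \<Rightarrow> bool \<Rightarrow> nat" where
  "tt Y e = (if e then tw_time Y 0 else tw_time Y (length Y - 1))"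

lemma Q:
  assumes line: "temporal_line V Es" and sol: "is_tdw_solution Es S Sol"
    and minl: "\<forall>Sol'. is_tdw_solution Es S Sol' \<longrightarrow> total_length Sol \<le> total_length Sol'"
  shows "p < length Sol \<Longrightarrow> X = snd (Sol ! p) \<Longrightarrow> j + 1 < length X \<Longrightarrow>
    tw_from X (j+1) = tw_to X j \<Longrightarrow> tw_to X (j+1) = tw_from X j \<Longrightarrow>
    \<exists>q e. q < length Sol \<and> tw_time X j \<le> tt (snd (Sol ! q)) e \<and> tt (snd (Sol ! q)) e \<le> tw_time X (j+1) \<and>
      (3 \<le> length X \<longrightarrow> tw_time X j < tt (snd (Sol ! q)) e \<and> tt (snd (Sol ! q)) e < tw_time X (j+1))"
proof (induction "tw_time X (j+1) - tw_time X j" arbitrary: p X j rule: less_induct)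
  case less
  have wX: "is_temporal_walk Es (fst (fst (Sol ! p))) (snd (fst (Sol ! p))) X"
    using sol less.prems unfolding is_tdw_solution_def by auto
  have walks: "is_temporal_walk Es (fst (fst (Sol ! q))) (snd (fst (Sol ! q))) (snd (Sol ! q))"
    if "q < length Sol" for q using sol that unfolding is_tdw_solution_def by auto
  have tj: "tw_time X j < tw_time X (j+1)" using walk_consec(2)[OF wX less.prems(3)] .
  show ?case
  proof (cases "3 \<le> length X")
    case False
    then have "j = 0" using less.prems by auto
    show ?thesis using less.prems tj False \<open>j = 0\<close>
      by (intro exI[of _ p] exI[of _ True]) (simp add: tt_def)
  next
    case True
    note n = True less.prems(3)
    note bf = less.prems(4,5)
    let ?W = "sc X j"
    have w': "is_temporal_walk Es (fst (fst (Sol ! p))) (snd (fst (Sol ! p))) ?W"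
      using sc_walk[OF wX n bf] .
    have "\<exists>q < length Sol. q \<noteq> p \<and> \<not> temporally_disjoint ?W (snd (Sol ! q))"
    proof (rule ccontr)
      assume "\<not> ?thesis"
      then have "is_tdw_solution Es S (Sol[p := (fst (Sol ! p), ?W)])"
        using sol_update[OF sol less.prems(1) w'] by blast
      then have le: "total_length Sol \<le> total_length (Sol[p := (fst (Sol ! p), ?W)])" using minl by blast
      have "total_length (Sol[p := (fst (Sol ! p), ?W)]) + length X = total_length Sol + length ?W"
        using total_update[OF less.prems(1), of "(fst (Sol ! p), ?W)"] less.prems(2) by simp
      moreover have "length ?W = length X - 2" using sc_len[of j X] n by auto
      ultimately show False using le True by linarith
    qed
    then obtain q where q: "q < length Sol" "q \<noteq> p" and nd: "\<not> temporally_disjoint ?W (snd (Sol ! q))" by blast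
    let ?Y = "snd (Sol ! q)"
    have wY: "is_temporal_walk Es (fst (fst (Sol ! q))) (snd (fst (Sol ! q))) ?Y" using walks q by blast
    have dXY: "temporally_disjoint X ?Y" using sol q less.prems(1,2) unfolding is_tdw_solution_def by auto
    obtain c d where cd: "(tw_from X j, c, d) \<in> occupation ?Y" "tw_time X j < c" "d < tw_time X (j+1)"
      using sc_disj[OF wX n bf wY dXY nd] by blast
    have cled: "c \<le> d" using occ_le[OF wY cd(1)] .
    let ?a = "tw_from X j" let ?b = "tw_to X j"
    have oXb: "(?b, tw_time X j, tw_time X (j+1)) \<in> occupation X" using occ_mid[OF n(2)] .
    consider (f) "(?a, c, d) = (tw_from ?Y 0, tw_time ?Y 0, tw_time ?Y 0)"
      | (m) m where "m + 1 < length ?Y" "(?a, c, d) = (tw_to ?Y m, tw_time ?Y m, tw_time ?Y (m + 1))"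
      | (l) "(?a, c, d) = (tw_to ?Y (length ?Y - 1), tw_time ?Y (length ?Y - 1), tw_time ?Y (length ?Y - 1))"
      using cd(1) unfolding occupation_def by blast
    then show ?thesis
    proof cases
      case f then show ?thesis using cd q tj by (intro exI[of _ q] exI[of _ True]) (auto simp: tt_def)
    next
      case l then show ?thesis using cd q tj by (intro exI[of _ q] exI[of _ False]) (auto simp: tt_def)
    next
      case (m m)
      have cm: "c = tw_time ?Y m" "d = tw_time ?Y (m+1)" "?a = tw_to ?Y m" using m by auto
      let ?u = "tw_from ?Y m" let ?w = "tw_to ?Y (m+1)"
      have bf1: "tw_from ?Y (m+1) = tw_to ?Y m" using walk_consec(1)[OF wY m(1)] by simp
      have e1: "{?a, ?u} \<in> underlying_edges Es" using walk_edge[OF wY, of m] m(1) cm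
        by (auto simp: insert_commute)
      have e2: "{?a, ?w} \<in> underlying_edges Es" using walk_edge[OF wY, of "m+1"] m(1) cm bf1 by auto
      have e3: "{?a, ?b} \<in> underlying_edges Es" using walk_edge[OF wX, of j] n by auto
      have ub: "?u \<noteq> ?b"
      proof
        assume ub: "?u = ?b"
        have "\<exists>x1. (?u, x1, c) \<in> occupation ?Y"
        proof (cases m)
          case 0 then show ?thesis using occ_first[of ?Y] cm by auto
        next
          case (Suc m')
          then show ?thesis using occ_mid[of m' ?Y] m(1) cm walk_consec(1)[OF wY, of m'] by auto
        qed
        then obtain x1 where o: "(?b, x1, c) \<in> occupation ?Y" using ub by auto
        have "x1 \<le> c" using occ_le[OF wY o] .
        then show False using disjD[OF dXY oXb o] cd cled by auto
      qed
      have wb: "?w \<noteq> ?b"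
      proof
        assume wb: "?w = ?b"
        have "\<exists>y2. (?w, d, y2) \<in> occupation ?Y"
        proof (cases "m + 2 < length ?Y")
          case True then show ?thesis using occ_mid[of "m+1" ?Y] cm by (auto simp: add.assoc)
        next
          case False
          then have "length ?Y - 1 = m + 1" using m(1) by auto
          then show ?thesis using occ_last[of ?Y] cm by auto
        qed
        then obtain y2 where o: "(?b, d, y2) \<in> occupation ?Y" using wb by auto
        have "d \<le> y2" using occ_le[OF wY o] .
        then show False using disjD[OF dXY oXb o] cd cled by auto
      qed
      have uw: "?u = ?w" using path_nbr[OF line e1 e2 e3 ub wb] .
      have lt: "tw_time ?Y (m+1) - tw_time ?Y m < tw_time X (j+1) - tw_time X j"
        using cd cm cled by auto
      from less.hyps[OF lt q(1) refl m(1) bf1 uw[symmetric]]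
      obtain q' e where "q' < length Sol" "tw_time ?Y m \<le> tt (snd (Sol ! q')) e" "tt (snd (Sol ! q')) e \<le> tw_time ?Y (m+1)"
        by blast
      then show ?thesis using cd cm by (intro exI[of _ q'] exI[of _ e]) auto
    qed
  qed
qed


theorem mainTheorem8:
  fixes V :: "'v set" and Es :: "('v set set) list"
    and S :: "('v \<times> 'v) multiset" and Sol :: "(('v \<times> 'v) \<times> 'v twalk) list"
    and s z :: 'v and W :: "'v twalk"
  assumes "temporal_line V Es"
    and "set_mset S \<subseteq> V \<times> V"
    and "is_tdw_solution Es S Sol"
    and "\<forall>Sol'. is_tdw_solution Es S Sol' \<longrightarrow> total_length Sol \<le> total_length Sol'"
    and "((s, z), W) \<in> set Sol"
  shows "num_back_and_forth W \<le> 2 * size S"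
proof -
  obtain p where p: "p < length Sol" "Sol ! p = ((s, z), W)" using assms(5) by (auto simp: in_set_conv_nth)
  have sz: "size S = length Sol" using assms(3) unfolding is_tdw_solution_def
    by (metis length_map size_mset)
  have wW: "is_temporal_walk Es s z W" using assms(3) p unfolding is_tdw_solution_def by force
  define B where "B = {i. i + 1 < length W \<and>
       tw_from W (i + 1) = tw_to W i \<and> tw_to W (i + 1) = tw_from W i \<and>
       tw_time W i < tw_time W (i + 1)}"
  have nb: "num_back_and_forth W = card B" unfolding num_back_and_forth_def B_def ..
  show ?thesis
  proof (cases "3 \<le> length W")
    case False
    then have "B \<subseteq> {0}" unfolding B_def by auto
    then have "card B \<le> card {0::nat}" by (intro card_mono) auto
    then have "card B \<le> 1" by simp
    then show ?thesis using nb sz p by auto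
  next
    case True
    let ?P = "\<lambda>i qe. fst qe < length Sol \<and> tw_time W i < tt (snd (Sol ! fst qe)) (snd qe) \<and>
                 tt (snd (Sol ! fst qe)) (snd qe) < tw_time W (i+1)"
    have "\<forall>i\<in>B. \<exists>qe. ?P i qe"
    proof
      fix i assume i: "i \<in> B"
      from Q[OF assms(1,3,4) p(1), of W i] i p True
      obtain q e where "q < length Sol" "tw_time W i < tt (snd (Sol ! q)) e" "tt (snd (Sol ! q)) e < tw_time W (i+1)"
        unfolding B_def by auto
      then show "\<exists>qe. ?P i qe" by (intro exI[of _ "(q, e)"]) auto
    qed
    then obtain f where f: "\<forall>i\<in>B. ?P i (f i)" by (metis bchoice)
    have inj: "inj_on f B"
    proof (rule inj_onI)
      fix i1 i2 assume i1: "i1 \<in> B" and i2: "i2 \<in> B" and eq: "f i1 = f i2"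
      have b1: "i1 + 1 < length W" "i2 + 1 < length W" using i1 i2 unfolding B_def by auto
      show "i1 = i2"
      proof (rule ccontr)
        assume "i1 \<noteq> i2"
        note ne = this
        have f1: "tw_time W i1 < tt (snd (Sol ! fst (f i1))) (snd (f i1))" "tt (snd (Sol ! fst (f i1))) (snd (f i1)) < tw_time W (i1+1)"
          using f i1 by auto
        have f2: "tw_time W i2 < tt (snd (Sol ! fst (f i1))) (snd (f i1))" "tt (snd (Sol ! fst (f i1))) (snd (f i1)) < tw_time W (i2+1)"
          using f i2 eq by auto
        consider "i1 < i2" | "i2 < i1" using ne by linarith
        then show False
        proof cases
          case 1
          have "tw_time W (i1+1) \<le> tw_time W i2" using walk_mono_le[OF wW, of "i1+1" i2] 1 b1 by auto
          then show False using f1 f2 by linarith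
        next
          case 2
          have "tw_time W (i2+1) \<le> tw_time W i1" using walk_mono_le[OF wW, of "i2+1" i1] 2 b1 by auto
          then show False using f1 f2 by linarith
        qed
      qed
    qed
    have sub: "f ` B \<subseteq> {..<length Sol} \<times> (UNIV :: bool set)" proof
      fix x assume "x \<in> f ` B"
      then obtain i where "i \<in> B" "x = f i" by blast
      then show "x \<in> {..<length Sol} \<times> (UNIV :: bool set)" using f by (cases x) (auto simp: mem_Times_iff)
    qed
    have "card B \<le> card ({..<length Sol} \<times> (UNIV :: bool set))"
      using card_inj_on_le[OF inj sub] by simp
    also have "\<dots> = 2 * length Sol" by (simp add: card_cartesian_product)
    finally show ?thesis using nb sz by simp
  qed
qed

end
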